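(* Assume $-1\in\mathbb F^2$ and let $J=JCK(Z,\delta)$. On $\mathcal A=\mathrm{Der}(J)^{[\bar1,\bar1]}$ define the multiplication $X\cdot Y=-\tau\bigl([\varphi(X),\varphi^2(Y)]\bigr)$ and the map $\bar X=-\tau(X)$, where $S_4$ acts on $\mathrm{Der}(J)$ by conjugation ($\sigma(X)=\sigma X\sigma^{-1}$) and $[\,,]$ is the supercommutator. Then $\bar X=X$ for all $X\in\mathcal A$, and the superalgebra $(\mathcal A,\cdot)$ is isomorphic to the Jordan superalgebra $K=Z\oplus Zy$ (a subalgebra of $J$); explicitly, $\Phi:K\to\mathcal A$, $f+gy\mapsto D(v_1,fv_2)+\sqrt{-1}\,D(v_3,gy)$ ($f,g\in Z$) is an isomorphism of superalgebras. Thus $(\mathcal A,\cdot,\bar{\ })$ is isomorphic to $K$ with the trivial involution.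
   Context: Let $\mathbb F$ be a field of characteristic $\neq 2$ with $-1\in\mathbb F^2$, $Z$ a unital commutative associative $\mathbb F$-algebra, and $\delta$ a derivation of $Z$ such that $Z\delta(Z)=Z$ (the $\mathbb F$-span of all products $f\delta(g)$, $f,g\in Z$, is $Z$). The Cheng-Kac Jordan superalgebra $J=JCK(Z,\delta)=J_{\bar0}\oplus J_{\bar1}$ is defined as follows: $J_{\bar0}=Z1\oplus Zw_1\oplus Zw_2\oplus Zw_3$ and $J_{\bar1}=Zx\oplus Zx_1\oplus Zx_2\oplus Zx_3$ are free $Z$-modules of rank 4; $J_{\bar0}$ is the $Z$-algebra $(\mathbb F1\oplus\mathbb Fw_1\oplus\mathbb Fw_2\oplus\mathbb Fw_3)\otimes_{\mathbb F}Z$ with $1$ the identity, $w_1^2=w_2^2=1$, $w_3^2=-1$, $w_iw_j=0$ for $i\ne j$. For $f,g\in Z$ and $i,j\in\{1,2,3\}$ the remaining products are: $f(gx)=(fg)x$, $f(gx_j)=(fg)x_j$, $(fw_i)(gx)=(\delta(f)g)x_i$, $(fw_i)(gx_j)=-(fg)x_{i\times j}$, $(fx)(gx)=\delta(f)g-f\delta(g)$, $(fx)(gx_j)=-(fg)w_j$, $(fx_i)(gx)=(fg)w_i$, $(fx_i)(gx_j)=0$, extended by supercommutativity ($ab=(-1)^{|a||b|}ba$), where $x_{1\times2}=-x_{2\times1}=x_3$, $x_{1\times3}=-x_{3\times1}=x_2$, $x_{3\times2}=-x_{2\times3}=x_1$, $x_{i\times i}=0$. $J$ is $\mathbb Z_2^2$-graded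 by $J^{[\bar0,\bar0]}=Z\oplus Zx$, $J^{[\bar1,\bar0]}=Zw_1\oplus Zx_1$, $J^{[\bar0,\bar1]}=Zw_2\oplus Zx_2$, $J^{[\bar1,\bar1]}=Zw_3\oplus Zx_3$, and $\mathrm{Der}(J)^{\alpha}$ denotes the (super) derivations mapping each $J^{\beta}$ into $J^{\alpha+\beta}$. $D(a,b)$ is $c\mapsto a(bc)-(-1)^{|a||b|}b(ac)$. Fix $\sqrt{-1}\in\mathbb F$ and set $v_1=\sqrt{-1}w_1$, $v_2=\sqrt{-1}w_2$, $v_3=w_3$, $y=x$, $y_1=\sqrt{-1}x_1$, $y_2=\sqrt{-1}x_2$, $y_3=x_3$. $S_4$ acts on $J$ by automorphisms via: $(1\,2)(3\,4)$ is the identity on $J^{[\bar0,\bar0]}\oplus J^{[\bar1,\bar1]}$ and $-1$ on $J^{[\bar1,\bar0]}\oplus J^{[\bar0,\bar1]}$; $(2\,3)(4\,1)$ is the identity on $J^{[\bar0,\bar0]}\oplus J^{[\bar1,\bar0]}$ and $-1$ on $J^{[\bar0,\bar1]}\oplus J^{[\bar1,\bar1]}$; $\varphi=(1\,2\,3)$ is $Z$-linear with $1\mapsto1$, $y\mapsto y$, $v_i\mapsto v_{i+1}$, $y_i\mapsto y_{i+1}$ (indices mod 3); $\tau=(1\,2)$ is $Z$-linear with $1\mapsto1$, $y\mapsto y$, $v_1\mapsto -v_2$, $v_2\mapsto-v_1$, $v_3\mapsto-v_3$, $y_1\mapsto-y_2$, $y_2\mapsto-y_1$, $y_3\mapsto-y_3$.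 *)

theory Defs
  imports Main
begin

text \<open>
  The field F is a type 'f, the algebra Z is a type 'z :: comm_ring_1, and the
  F-algebra structure of Z is given by a unital ring homomorphism iota : F -> Z
  (scalar multiplication c.z = iota c * z).  An element of J is stored by its eight
  Z-coordinates with respect to the Z-basis 1, w1, w2, w3 (even part) and x, x1, x2, x3
  (odd part): J c0 c1 c2 c3 d0 d1 d2 d3 = c0 1 + c1 w1 + c2 w2 + c3 w3 + d0 x + d1 x1 + d2 x2 + d3 x3.
\<close>

datatype 'z J = J (c0: 'z) (c1: 'z) (c2: 'z) (c3: 'z) (d0: 'z) (d1: 'z) (d2: 'z) (d3: 'z)

instantiation J :: (ab_group_add) ab_group_add
begin
definition zero_J_def: "0 = J 0 0 0 0 0 0 0 0"
definition plus_J_def: "a + b = J (c0 a + c0 b) (c1 a + c1 b) (c2 a + c2 b) (c3 a + c3 b)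
                                 (d0 a + d0 b) (d1 a + d1 b) (d2 a + d2 b) (d3 a + d3 b)"
definition uminus_J_def: "- a = J (- c0 a) (- c1 a) (- c2 a) (- c3 a) (- d0 a) (- d1 a) (- d2 a) (- d3 a)"
definition minus_J_def: "a - b = J (c0 a - c0 b) (c1 a - c1 b) (c2 a - c2 b) (c3 a - c3 b)
                                 (d0 a - d0 b) (d1 a - d1 b) (d2 a - d2 b) (d3 a - d3 b)"
instance
  by standard (simp_all add: zero_J_def plus_J_def uminus_J_def minus_J_def algebra_simps)
end

definition zs :: "'z::comm_ring_1 \<Rightarrow> 'z J \<Rightarrow> 'z J" where
  "zs z a = J (z * c0 a) (z * c1 a) (z * c2 a) (z * c3 a) (z * d0 a) (z * d1 a) (z * d2 a) (z * d3 a)"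

text \<open>The product of J, obtained by bilinear extension of the multiplication table
  (w_i^2 = 1 (i=1,2), w_3^2 = -1, w_i w_j = 0 (i /= j), (f w_i)(g x) = (delta f g) x_i,
  (f w_i)(g x_j) = -(fg) x_{i x j}, (fx)(gx) = delta f g - f delta g, (fx)(g x_j) = -(fg) w_j,
  (f x_i)(g x) = (fg) w_i, (f x_i)(g x_j) = 0, supercommutativity).\<close>
definition jmul :: "('z::comm_ring_1 \<Rightarrow> 'z) \<Rightarrow> 'z J \<Rightarrow> 'z J \<Rightarrow> 'z J" where
  "jmul \<delta> a b = J
     \<comment> \<open>coefficient of 1: even*even plus odd*odd\<close>
     (c0 a * c0 b + c1 a * c1 b + c2 a * c2 b - c3 a * c3 b
        + (\<delta> (d0 a) * d0 b - d0 a * \<delta> (d0 b)))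
     \<comment> \<open>coefficients of w1, w2, w3\<close>
     (c0 a * c1 b + c1 a * c0 b - d0 a * d1 b + d1 a * d0 b)
     (c0 a * c2 b + c2 a * c0 b - d0 a * d2 b + d2 a * d0 b)
     (c0 a * c3 b + c3 a * c0 b - d0 a * d3 b + d3 a * d0 b)
     \<comment> \<open>coefficient of x: (even a)(odd b) + (odd a)(even b)\<close>
     (c0 a * d0 b + c0 b * d0 a)
     \<comment> \<open>coefficients of x1, x2, x3\<close>
     (c0 a * d1 b + \<delta> (c1 a) * d0 b - c3 a * d2 b + c2 a * d3 b
      + c0 b * d1 a + \<delta> (c1 b) * d0 a - c3 b * d2 a + c2 b * d3 a)
     (c0 a * d2 b + \<delta> (c2 a) * d0 b - c1 a * d3 b + c3 a * d1 b
      + c0 b * d2 a + \<delta> (c2 b) * d0 a - c1 b * d3 a + c3 b * d1 a)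
     (c0 a * d3 b + \<delta> (c3 a) * d0 b - c1 a * d2 b + c2 a * d1 b
      + c0 b * d3 a + \<delta> (c3 b) * d0 a - c1 b * d2 a + c2 b * d1 a)"

definition evp :: "'z::zero J \<Rightarrow> 'z J" where
  "evp a = J (c0 a) (c1 a) (c2 a) (c3 a) 0 0 0 0"
definition odp :: "'z::zero J \<Rightarrow> 'z J" where
  "odp a = J 0 0 0 0 (d0 a) (d1 a) (d2 a) (d3 a)"

definition Jev :: "'z::zero J set" where "Jev = {a. odp a = J 0 0 0 0 0 0 0 0}"
definition Jod :: "'z::zero J set" where "Jod = {a. evp a = J 0 0 0 0 0 0 0 0}"

text \<open>Parity of a homogeneous element (True = odd); 0 counts as even.\<close>
definition par :: "'z::zero J \<Rightarrow> bool" where "par a = (a \<notin> Jev)"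

text \<open>Z_2^2-grading; degrees are pairs of booleans (True = 1bar).  Degree [0,0]: 1, x;
  [1,0]: w1, x1; [0,1]: w2, x2; [1,1]: w3, x3.\<close>
definition gadd :: "bool \<times> bool \<Rightarrow> bool \<times> bool \<Rightarrow> bool \<times> bool" where
  "gadd \<alpha> \<beta> = (fst \<alpha> \<noteq> fst \<beta>, snd \<alpha> \<noteq> snd \<beta>)"

definition gproj :: "bool \<times> bool \<Rightarrow> 'z::zero J \<Rightarrow> 'z J" where
  "gproj \<alpha> a = J (if \<alpha> = (False, False) then c0 a else 0) (if \<alpha> = (True, False) then c1 a else 0)
                  (if \<alpha> = (False, True) then c2 a else 0) (if \<alpha> = (True, True) then c3 a else 0)
                  (if \<alpha> = (False, False) then d0 a else 0) (if \<alpha> = (True, False) then d1 a else 0)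
                  (if \<alpha> = (False, True) then d2 a else 0) (if \<alpha> = (True, True) then d3 a else 0)"

definition Jg :: "bool \<times> bool \<Rightarrow> 'z::zero J set" where "Jg \<alpha> = {a. gproj \<alpha> a = a}"

definition Flin :: "('f \<Rightarrow> 'z::comm_ring_1) \<Rightarrow> ('z J \<Rightarrow> 'z J) \<Rightarrow> bool" where
  "Flin \<iota> X \<longleftrightarrow> (\<forall>a b. X (a + b) = X a + X b) \<and> (\<forall>c a. X (zs (\<iota> c) a) = zs (\<iota> c) (X a))"

definition sder :: "('f \<Rightarrow> 'z::comm_ring_1) \<Rightarrow> ('z \<Rightarrow> 'z) \<Rightarrow> bool \<Rightarrow> ('z J \<Rightarrow> 'z J) \<Rightarrow> bool" where
  "sder \<iota> \<delta> p X \<longleftrightarrow> Flin \<iota> X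
     \<and> X ` Jev \<subseteq> (if p then Jod else Jev) \<and> X ` Jod \<subseteq> (if p then Jev else Jod)
     \<and> (\<forall>a b. a \<in> Jev \<union> Jod \<longrightarrow>
          X (jmul \<delta> a b) = jmul \<delta> (X a) b
             + (if p \<and> par a then - jmul \<delta> a (X b) else jmul \<delta> a (X b)))"

definition Der :: "('f \<Rightarrow> 'z::comm_ring_1) \<Rightarrow> ('z \<Rightarrow> 'z) \<Rightarrow> ('z J \<Rightarrow> 'z J) set" where
  "Der \<iota> \<delta> = {X. \<exists>X0 X1. sder \<iota> \<delta> False X0 \<and> sder \<iota> \<delta> True X1 \<and> X = (\<lambda>a. X0 a + X1 a)}"

definition DerG :: "('f \<Rightarrow> 'z::comm_ring_1) \<Rightarrow> ('z \<Rightarrow> 'z) \<Rightarrow> bool \<times> bool \<Rightarrow> ('z J \<Rightarrow> 'z J) set" where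
  "DerG \<iota> \<delta> \<alpha> = {X \<in> Der \<iota> \<delta>. \<forall>\<beta>. X ` Jg \<beta> \<subseteq> Jg (gadd \<alpha> \<beta>)}"

text \<open>Even / odd components of a linear map and the supercommutator (bilinear extension).\<close>
definition evm :: "('z::ab_group_add J \<Rightarrow> 'z J) \<Rightarrow> 'z J \<Rightarrow> 'z J" where
  "evm X a = evp (X (evp a)) + odp (X (odp a))"
definition odm :: "('z::ab_group_add J \<Rightarrow> 'z J) \<Rightarrow> 'z J \<Rightarrow> 'z J" where
  "odm X a = odp (X (evp a)) + evp (X (odp a))"

definition scom :: "('z::ab_group_add J \<Rightarrow> 'z J) \<Rightarrow> ('z J \<Rightarrow> 'z J) \<Rightarrow> 'z J \<Rightarrow> 'z J" where
  "scom X Y a =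
      (evm X (evm Y a) - evm Y (evm X a)) + (evm X (odm Y a) - odm Y (evm X a))
    + (odm X (evm Y a) - evm Y (odm X a)) + (odm X (odm Y a) + odm Y (odm X a))"

definition one :: "'z::comm_ring_1 J" where "one = J 1 0 0 0 0 0 0 0"
definition yy :: "'z::comm_ring_1 J" where "yy = J 0 0 0 0 1 0 0 0"
definition v1 :: "('f \<Rightarrow> 'z::comm_ring_1) \<Rightarrow> 'f \<Rightarrow> 'z J" where "v1 \<iota> i = J 0 (\<iota> i) 0 0 0 0 0 0"
definition v2 :: "('f \<Rightarrow> 'z::comm_ring_1) \<Rightarrow> 'f \<Rightarrow> 'z J" where "v2 \<iota> i = J 0 0 (\<iota> i) 0 0 0 0 0"
definition v3 :: "'z::comm_ring_1 J" where "v3 = J 0 0 0 1 0 0 0 0"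
definition y1 :: "('f \<Rightarrow> 'z::comm_ring_1) \<Rightarrow> 'f \<Rightarrow> 'z J" where "y1 \<iota> i = J 0 0 0 0 0 (\<iota> i) 0 0"
definition y2 :: "('f \<Rightarrow> 'z::comm_ring_1) \<Rightarrow> 'f \<Rightarrow> 'z J" where "y2 \<iota> i = J 0 0 0 0 0 0 (\<iota> i) 0"
definition y3 :: "'z::comm_ring_1 J" where "y3 = J 0 0 0 0 0 0 0 1"

text \<open>Coordinates w.r.t. the Z-basis 1, v1, v2, v3, y, y1, y2, y3
  (since i^2 = -1: w_k = -i v_k, x_k = -i y_k for k = 1,2; w3 = v3, x3 = y3).\<close>
definition phi :: "('f \<Rightarrow> 'z::comm_ring_1) \<Rightarrow> 'f \<Rightarrow> 'z J \<Rightarrow> 'z J" where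
  "phi \<iota> i a = zs (c0 a) one + zs (d0 a) yy
     + zs (- \<iota> i * c1 a) (v2 \<iota> i) + zs (- \<iota> i * c2 a) v3 + zs (c3 a) (v1 \<iota> i)
     + zs (- \<iota> i * d1 a) (y2 \<iota> i) + zs (- \<iota> i * d2 a) y3 + zs (d3 a) (y1 \<iota> i)"

definition tau :: "('f \<Rightarrow> 'z::comm_ring_1) \<Rightarrow> 'f \<Rightarrow> 'z J \<Rightarrow> 'z J" where
  "tau \<iota> i a = zs (c0 a) one + zs (d0 a) yy
     - zs (- \<iota> i * c1 a) (v2 \<iota> i) - zs (- \<iota> i * c2 a) (v1 \<iota> i) - zs (c3 a) v3
     - zs (- \<iota> i * d1 a) (y2 \<iota> i) - zs (- \<iota> i * d2 a) (y1 \<iota> i) - zs (d3 a) y3"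

definition conj :: "('a \<Rightarrow> 'a) \<Rightarrow> ('a \<Rightarrow> 'a) \<Rightarrow> 'a \<Rightarrow> 'a" where
  "conj \<sigma> X = \<sigma> \<circ> X \<circ> inv \<sigma>"

definition Aset :: "('f \<Rightarrow> 'z::comm_ring_1) \<Rightarrow> ('z \<Rightarrow> 'z) \<Rightarrow> ('z J \<Rightarrow> 'z J) set" where
  "Aset \<iota> \<delta> = DerG \<iota> \<delta> (True, True)"

definition Amul :: "('f \<Rightarrow> 'z::comm_ring_1) \<Rightarrow> 'f \<Rightarrow> ('z J \<Rightarrow> 'z J) \<Rightarrow> ('z J \<Rightarrow> 'z J) \<Rightarrow> 'z J \<Rightarrow> 'z J" where
  "Amul \<iota> i X Y = (\<lambda>a. - conj (tau \<iota> i) (scom (conj (phi \<iota> i) X) (conj (phi \<iota> i \<circ> phi \<iota> i) Y)) a)"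

definition Abar :: "('f \<Rightarrow> 'z::comm_ring_1) \<Rightarrow> 'f \<Rightarrow> ('z J \<Rightarrow> 'z J) \<Rightarrow> 'z J \<Rightarrow> 'z J" where
  "Abar \<iota> i X = (\<lambda>a. - conj (tau \<iota> i) X a)"

definition Kset :: "'z::comm_ring_1 J set" where
  "Kset = {a. \<exists>f g. a = zs f one + zs g yy}"

definition Dop :: "('z::comm_ring_1 \<Rightarrow> 'z) \<Rightarrow> 'z J \<Rightarrow> 'z J \<Rightarrow> 'z J \<Rightarrow> 'z J" where
  "Dop \<delta> a b c = (if par a \<and> par b then jmul \<delta> a (jmul \<delta> b c) + jmul \<delta> b (jmul \<delta> a c)
                  else jmul \<delta> a (jmul \<delta> b c) - jmul \<delta> b (jmul \<delta> a c))"

definition Phi :: "('f \<Rightarrow> 'z::comm_ring_1) \<Rightarrow> ('z \<Rightarrow> 'z) \<Rightarrow> 'f \<Rightarrow> 'z J \<Rightarrow> 'z J \<Rightarrow> 'z J" where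
  "Phi \<iota> \<delta> i k = (\<lambda>c. Dop \<delta> (v1 \<iota> i) (zs (c0 k) (v2 \<iota> i)) c
                     + zs (\<iota> i) (Dop \<delta> v3 (zs (d0 k) yy) c))"

end

theory Submission
  imports Defs
begin

locale ck =
  fixes \<iota> :: "'f::field \<Rightarrow> 'z::comm_ring_1" and \<delta> :: "'z \<Rightarrow> 'z" and i :: 'f
  assumes iota_add: "\<And>a b. \<iota> (a + b) = \<iota> a + \<iota> b"
    and iota_mult: "\<And>a b. \<iota> (a * b) = \<iota> a * \<iota> b"
    and iota_one: "\<iota> 1 = 1"
    and char: "(2::'f) \<noteq> 0"
    and sqrt_m1: "i * i = -1"
    and der_add: "\<And>f g. \<delta> (f + g) = \<delta> f + \<delta> g"
    and der_smul: "\<And>c f. \<delta> (\<iota> c * f) = \<iota> c * \<delta> f"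
    and der_leibniz: "\<And>f g. \<delta> (f * g) = \<delta> f * g + f * \<delta> g"
begin

abbreviation "I \<equiv> \<iota> i"

lemma iota0: "\<iota> 0 = 0"
  using iota_add[of 0 0] by simp
lemma iota_neg: "\<iota> (- a) = - \<iota> a"
  using iota_add[of a "-a"] iota0 by (simp add: eq_neg_iff_add_eq_0 add.commute)
lemma II: "I * I = -1"
  using iota_mult[of i i] sqrt_m1 iota_neg[of 1] iota_one by simp
lemma II2: "I * (I * x) = - x"
  by (metis II mult.assoc mult_minus1)
lemma half: "\<exists>h. h + h = (1::'z)"
proof -
  have "(1/2) + (1/2) = (1::'f)" using char by (simp add: field_simps)
  then have "\<iota> (1/2) + \<iota> (1/2) = \<iota> 1" by (metis iota_add)
  then show ?thesis using iota_one by auto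
qed
lemma two_zero: "(x::'z) + x = 0 \<Longrightarrow> x = 0"
proof -
  assume a: "x + x = 0"
  obtain h where "h + h = (1::'z)" using half by blast
  then have "x = h * (x + x)" by (metis distrib_left distrib_right mult_1 mult.commute)
  then show ?thesis using a by simp
qed

lemma d0: "\<delta> 0 = 0" using der_add[of 0 0] by simp
lemma dneg: "\<delta> (- x) = - \<delta> x" using der_add[of x "-x"] d0 minus_unique[of "\<delta> x" "\<delta> (-x)"] by simp
lemma ddiff: "\<delta> (x - y) = \<delta> x - \<delta> y" using der_add[of x "-y"] dneg by simp
lemma d1: "\<delta> 1 = 0" using der_leibniz[of 1 1] by simp
lemma dI: "\<delta> (I * x) = I * \<delta> x" by (rule der_smul)
lemma dconst: "\<delta> (\<iota> c) = 0" using der_smul[of c 1] d1 by simp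

lemmas dsimps = der_add dneg ddiff der_leibniz d0 d1 dconst

definition PhiE :: "'z \<Rightarrow> 'z J \<Rightarrow> 'z J" where
  "PhiE m c = J 0 (- (m * c2 c)) (m * c1 c) 0 0 (- (m * d2 c)) (m * d1 c) (\<delta> m * d0 c)"
definition PhiO :: "'z \<Rightarrow> 'z J \<Rightarrow> 'z J" where
  "PhiO s c = J (s * d3 c) (- (s * d2 c)) (s * d1 c) (\<delta> s * d0 c - s * \<delta> (d0 c)) (s * c3 c)
     (- (s * \<delta> (c2 c))) (s * \<delta> (c1 c)) (- (s * \<delta> (c0 c)))"

lemma J_eq_iff: "(a::'z J) = b \<longleftrightarrow> c0 a = c0 b \<and> c1 a = c1 b \<and> c2 a = c2 b \<and> c3 a = c3 b
   \<and> d0 a = d0 b \<and> d1 a = d1 b \<and> d2 a = d2 b \<and> d3 a = d3 b"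
  by (cases a; cases b) auto

lemma Jsel_simps[simp]:
  "c0 (a + b) = c0 a + c0 b" "c1 (a + b) = c1 a + c1 b" "c2 (a + b) = c2 a + c2 b" "c3 (a + b) = c3 a + c3 b"
  "d0 (a + b) = d0 a + d0 b" "d1 (a + b) = d1 a + d1 b" "d2 (a + b) = d2 a + d2 b" "d3 (a + b) = d3 a + d3 b"
  "c0 (a - b) = c0 a - c0 b" "c1 (a - b) = c1 a - c1 b" "c2 (a - b) = c2 a - c2 b" "c3 (a - b) = c3 a - c3 b"
  "d0 (a - b) = d0 a - d0 b" "d1 (a - b) = d1 a - d1 b" "d2 (a - b) = d2 a - d2 b" "d3 (a - b) = d3 a - d3 b"
  "c0 (- a) = - c0 a" "c1 (- a) = - c1 a" "c2 (- a) = - c2 a" "c3 (- a) = - c3 a"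
  "d0 (- a) = - d0 a" "d1 (- a) = - d1 a" "d2 (- a) = - d2 a" "d3 (- a) = - d3 a"
  "c0 0 = 0" "c1 0 = 0" "c2 0 = 0" "c3 0 = 0" "d0 0 = 0" "d1 0 = 0" "d2 0 = 0" "d3 0 = 0"
  for a b :: "'z J"
  by (simp_all add: plus_J_def minus_J_def uminus_J_def zero_J_def)

lemma zs_sel[simp]:
  "c0 (zs z a) = z * c0 a" "c1 (zs z a) = z * c1 a" "c2 (zs z a) = z * c2 a" "c3 (zs z a) = z * c3 a"
  "d0 (zs z a) = z * d0 a" "d1 (zs z a) = z * d1 a" "d2 (zs z a) = z * d2 a" "d3 (zs z a) = z * d3 a"
  by (simp_all add: zs_def)

lemma jmul_sel:
  "c0 (jmul \<delta> a b) = c0 a * c0 b + c1 a * c1 b + c2 a * c2 b - c3 a * c3 b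
        + (\<delta> (d0 a) * d0 b - d0 a * \<delta> (d0 b))"
  "c1 (jmul \<delta> a b) = c0 a * c1 b + c1 a * c0 b - d0 a * d1 b + d1 a * d0 b"
  "c2 (jmul \<delta> a b) = c0 a * c2 b + c2 a * c0 b - d0 a * d2 b + d2 a * d0 b"
  "c3 (jmul \<delta> a b) = c0 a * c3 b + c3 a * c0 b - d0 a * d3 b + d3 a * d0 b"
  "d0 (jmul \<delta> a b) = c0 a * d0 b + c0 b * d0 a"
  "d1 (jmul \<delta> a b) = c0 a * d1 b + \<delta> (c1 a) * d0 b - c3 a * d2 b + c2 a * d3 b
      + c0 b * d1 a + \<delta> (c1 b) * d0 a - c3 b * d2 a + c2 b * d3 a"
  "d2 (jmul \<delta> a b) = c0 a * d2 b + \<delta> (c2 a) * d0 b - c1 a * d3 b + c3 a * d1 b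
      + c0 b * d2 a + \<delta> (c2 b) * d0 a - c1 b * d3 a + c3 b * d1 a"
  "d3 (jmul \<delta> a b) = c0 a * d3 b + \<delta> (c3 a) * d0 b - c1 a * d2 b + c2 a * d1 b
      + c0 b * d3 a + \<delta> (c3 b) * d0 a - c1 b * d2 a + c2 b * d1 a"
  by (simp_all add: jmul_def)

lemma basis_sel[simp]:
  "c0 one = 1" "c1 one = 0" "c2 one = 0" "c3 one = 0" "d0 one = 0" "d1 one = 0" "d2 one = 0" "d3 one = 0"
  "c0 yy = 0" "c1 yy = 0" "c2 yy = 0" "c3 yy = 0" "d0 yy = 1" "d1 yy = 0" "d2 yy = 0" "d3 yy = 0"
  "c0 v3 = 0" "c1 v3 = 0" "c2 v3 = 0" "c3 v3 = 1" "d0 v3 = 0" "d1 v3 = 0" "d2 v3 = 0" "d3 v3 = 0"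
  "c0 y3 = 0" "c1 y3 = 0" "c2 y3 = 0" "c3 y3 = 0" "d0 y3 = 0" "d1 y3 = 0" "d2 y3 = 0" "d3 y3 = 1"
  "c0 (v1 \<iota> i) = 0" "c1 (v1 \<iota> i) = I" "c2 (v1 \<iota> i) = 0" "c3 (v1 \<iota> i) = 0" "d0 (v1 \<iota> i) = 0" "d1 (v1 \<iota> i) = 0" "d2 (v1 \<iota> i) = 0" "d3 (v1 \<iota> i) = 0"
  "c0 (v2 \<iota> i) = 0" "c1 (v2 \<iota> i) = 0" "c2 (v2 \<iota> i) = I" "c3 (v2 \<iota> i) = 0" "d0 (v2 \<iota> i) = 0" "d1 (v2 \<iota> i) = 0" "d2 (v2 \<iota> i) = 0" "d3 (v2 \<iota> i) = 0"
  "c0 (y1 \<iota> i) = 0" "c1 (y1 \<iota> i) = 0" "c2 (y1 \<iota> i) = 0" "c3 (y1 \<iota> i) = 0" "d0 (y1 \<iota> i) = 0" "d1 (y1 \<iota> i) = I" "d2 (y1 \<iota> i) = 0" "d3 (y1 \<iota> i) = 0"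
  "c0 (y2 \<iota> i) = 0" "c1 (y2 \<iota> i) = 0" "c2 (y2 \<iota> i) = 0" "c3 (y2 \<iota> i) = 0" "d0 (y2 \<iota> i) = 0" "d1 (y2 \<iota> i) = 0" "d2 (y2 \<iota> i) = I" "d3 (y2 \<iota> i) = 0"
  by (simp_all add: one_def yy_def v1_def v2_def v3_def y1_def y2_def y3_def)

lemma phi_closed: "phi \<iota> i a = J (c0 a) (I * c3 a) (c1 a) (- (I * c2 a)) (d0 a) (I * d3 a) (d1 a) (- (I * d2 a))"
  by (simp add: phi_def J_eq_iff algebra_simps II II2)

lemma tau_closed: "tau \<iota> i a = J (c0 a) (- c2 a) (- c1 a) (- c3 a) (d0 a) (- d2 a) (- d1 a) (- d3 a)"
  by (simp add: tau_def J_eq_iff algebra_simps II II2)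

lemma par_v: "\<not> par (v1 \<iota> i)" "\<not> par v3"
  by (simp_all add: par_def Jev_def odp_def v1_def v3_def)

lemma Phi_closed: "Phi \<iota> \<delta> i k c = PhiE (c0 k) c + PhiO (I * d0 k) c"
  by (simp add: Phi_def Dop_def par_v J_eq_iff PhiE_def PhiO_def jmul_sel algebra_simps II II2 dsimps dI)


lemma Jev_iff: "a \<in> Jev \<longleftrightarrow> d0 a = 0 \<and> d1 a = 0 \<and> d2 a = 0 \<and> d3 a = 0"
  by (cases a) (simp add: Jev_def odp_def)
lemma Jod_iff: "a \<in> Jod \<longleftrightarrow> c0 a = 0 \<and> c1 a = 0 \<and> c2 a = 0 \<and> c3 a = 0"
  by (cases a) (simp add: Jod_def evp_def)

lemma PhiE_der: "PhiE m (jmul \<delta> a b) = jmul \<delta> (PhiE m a) b + jmul \<delta> a (PhiE m b)"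
  by (simp add: PhiE_def J_eq_iff jmul_sel dsimps algebra_simps)

lemma PhiO_der_ev: "a \<in> Jev \<Longrightarrow> PhiO s (jmul \<delta> a b) = jmul \<delta> (PhiO s a) b + jmul \<delta> a (PhiO s b)"
  by (simp add: Jev_iff PhiO_def J_eq_iff jmul_sel dsimps algebra_simps)

lemma PhiO_der_od: "a \<in> Jod \<Longrightarrow> PhiO s (jmul \<delta> a b) = jmul \<delta> (PhiO s a) b - jmul \<delta> a (PhiO s b)"
  by (simp add: Jod_iff PhiO_def J_eq_iff jmul_sel dsimps algebra_simps)


lemma sder_PhiE: "sder \<iota> \<delta> False (PhiE m)"
  unfolding sder_def Flin_def
  by (auto simp: PhiE_der Jev_iff Jod_iff) (simp_all add: PhiE_def J_eq_iff algebra_simps dsimps der_smul)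

lemma sder_PhiO: "sder \<iota> \<delta> True (PhiO s)"
  unfolding sder_def Flin_def
proof (intro conjI allI impI)
  show "PhiO s (a + b) = PhiO s a + PhiO s b" for a b
    by (simp add: PhiO_def J_eq_iff algebra_simps dsimps)
  show "PhiO s (zs (\<iota> c) a) = zs (\<iota> c) (PhiO s a)" for c a
    by (simp add: PhiO_def J_eq_iff algebra_simps dsimps der_smul)
  show "PhiO s ` Jev \<subseteq> (if True then Jod else Jev)"
    by (auto simp: Jev_iff Jod_iff PhiO_def dsimps)
  show "PhiO s ` Jod \<subseteq> (if True then Jev else Jod)"
    by (auto simp: Jev_iff Jod_iff PhiO_def dsimps)
  fix a b :: "'z J" assume "a \<in> Jev \<union> Jod"
  then show "PhiO s (jmul \<delta> a b) = jmul \<delta> (PhiO s a) b +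
      (if True \<and> par a then - jmul \<delta> a (PhiO s b) else jmul \<delta> a (PhiO s b))"
    using PhiO_der_ev PhiO_der_od by (auto simp: par_def)
qed


definition "w1e = J 0 1 0 0 0 0 0 (0::'z)"
definition "w2e = J 0 0 1 0 0 0 0 (0::'z)"
definition "w3e = J 0 0 0 1 0 0 0 (0::'z)"
definition "xe = J 0 0 0 0 1 0 0 (0::'z)"
definition "x1e = J 0 0 0 0 0 1 0 (0::'z)"
definition "x2e = J 0 0 0 0 0 0 1 (0::'z)"
definition "x3e = J 0 0 0 0 0 0 0 (1::'z)"
lemmas be_defs = w1e_def w2e_def w3e_def xe_def x1e_def x2e_def x3e_def one_def

lemma decomp: "c = zs (c0 c) one + zs (c1 c) w1e + zs (c2 c) w2e + zs (c3 c) w3e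
   + zs (d0 c) xe + zs (d1 c) x1e + zs (d2 c) x2e + zs (d3 c) x3e"
  by (simp add: J_eq_iff be_defs)

lemma zs_one_mul: "jmul \<delta> (zs h one) b = zs h b"
  by (simp add: J_eq_iff jmul_sel d0 algebra_simps)

lemma one_mul: "jmul \<delta> one b = b"
  by (simp add: J_eq_iff jmul_sel d0 algebra_simps)

lemma mul_one: "jmul \<delta> b one = b"
  by (simp add: J_eq_iff jmul_sel d0 algebra_simps)

lemma bprod: "jmul \<delta> xe x2e = zs (-1) w2e" "jmul \<delta> w1e w2e = 0" "jmul \<delta> w1e w3e = 0"
  "jmul \<delta> w1e xe = 0" "jmul \<delta> w1e x2e = zs (-1) x3e" "jmul \<delta> w1e w1e = one" "jmul \<delta> w2e w2e = one"
  "jmul \<delta> x1e xe = w1e" "jmul \<delta> x3e xe = w3e" "jmul \<delta> w3e x1e = x2e" "jmul \<delta> w2e x3e = x1e"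
  "jmul \<delta> (zs h w1e) xe = zs (\<delta> h) x1e" "jmul \<delta> xe (zs h x1e) = zs (-h) w1e"
  by (simp_all add: J_eq_iff jmul_sel be_defs dsimps)

lemma shape_ev: "a \<in> Jg \<gamma> \<Longrightarrow> a \<in> Jev \<Longrightarrow> a = gproj \<gamma> (evp a)"
  by (cases \<gamma>) (auto simp: Jg_def gproj_def evp_def Jev_iff J_eq_iff split: if_splits)
lemma shape_od: "a \<in> Jg \<gamma> \<Longrightarrow> a \<in> Jod \<Longrightarrow> a = gproj \<gamma> (odp a)"
  by (cases \<gamma>) (auto simp: Jg_def gproj_def odp_def Jod_iff J_eq_iff split: if_splits)

lemma Jg_basis: "zs h one \<in> Jg (False,False)" "w1e \<in> Jg (True,False)" "w2e \<in> Jg (False,True)"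
  "w3e \<in> Jg (True,True)" "xe \<in> Jg (False,False)" "x1e \<in> Jg (True,False)" "x2e \<in> Jg (False,True)"
  "x3e \<in> Jg (True,True)"
  by (simp_all add: Jg_def gproj_def J_eq_iff be_defs zs_def)

lemma par_basis: "zs h one \<in> Jev" "w1e \<in> Jev" "w2e \<in> Jev" "w3e \<in> Jev" "one \<in> Jev"
  "xe \<in> Jod" "x1e \<in> Jod" "x2e \<in> Jod" "x3e \<in> Jod" "par xe" "par x1e" "par x2e" "par x3e" "zs h w1e \<in> Jev"
  by (simp_all add: Jev_iff Jod_iff par_def be_defs)


lemma class_ev:
  assumes sd: "sder \<iota> \<delta> False X" and grd: "\<forall>\<beta>. X ` Jg \<beta> \<subseteq> Jg (gadd (True,True) \<beta>)"
  shows "X = PhiE (c2 (X w1e))"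
proof -
  have add: "X (a + b) = X a + X b" for a b using sd by (simp add: sder_def Flin_def)
  have der: "a \<in> Jev \<union> Jod \<Longrightarrow> X (jmul \<delta> a b) = jmul \<delta> (X a) b + jmul \<delta> a (X b)" for a b
    using sd unfolding sder_def by auto
  have ev: "a \<in> Jev \<Longrightarrow> X a \<in> Jev" for a using sd by (auto simp: sder_def)
  have od: "a \<in> Jod \<Longrightarrow> X a \<in> Jod" for a using sd by (auto simp: sder_def)
  have gr: "a \<in> Jg \<beta> \<Longrightarrow> X a \<in> Jg (gadd (True,True) \<beta>)" for a \<beta> using grd by blast
  have leib: "X (zs h b) = jmul \<delta> (X (zs h one)) b + zs h (X b)" for h b
    using der[of "zs h one" b] par_basis(1)[of h] by (simp add: zs_one_mul)
  define \<alpha> where "\<alpha> h = c3 (X (zs h one))" for h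
  have sA: "X (zs h one) = J 0 0 0 (\<alpha> h) 0 0 0 0" for h
    using shape_ev[OF gr[OF Jg_basis(1)] ev[OF par_basis(1)]] by (simp add: gproj_def gadd_def evp_def \<alpha>_def)
  obtain \<mu> where s1: "X w1e = J 0 0 \<mu> 0 0 0 0 0"
    using shape_ev[OF gr[OF Jg_basis(2)] ev[OF par_basis(2)]] by (simp add: gproj_def gadd_def evp_def)
  obtain \<nu> where s2: "X w2e = J 0 \<nu> 0 0 0 0 0 0"
    using shape_ev[OF gr[OF Jg_basis(3)] ev[OF par_basis(3)]] by (simp add: gproj_def gadd_def evp_def)
  obtain \<gamma> where s3: "X w3e = J \<gamma> 0 0 0 0 0 0 0"
    using shape_ev[OF gr[OF Jg_basis(4)] ev[OF par_basis(4)]] by (simp add: gproj_def gadd_def evp_def)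
  obtain la where sx: "X xe = J 0 0 0 0 0 0 0 la"
    using shape_od[OF gr[OF Jg_basis(5)] od[OF par_basis(6)]] by (simp add: gproj_def gadd_def odp_def)
  obtain \<kappa> where sx1: "X x1e = J 0 0 0 0 0 0 \<kappa> 0"
    using shape_od[OF gr[OF Jg_basis(6)] od[OF par_basis(7)]] by (simp add: gproj_def gadd_def odp_def)
  obtain \<kappa>' where sx2: "X x2e = J 0 0 0 0 0 \<kappa>' 0 0"
    using shape_od[OF gr[OF Jg_basis(7)] od[OF par_basis(8)]] by (simp add: gproj_def gadd_def odp_def)
  obtain \<epsilon> where sx3: "X x3e = J 0 0 0 0 \<epsilon> 0 0 0"
    using shape_od[OF gr[OF Jg_basis(8)] od[OF par_basis(9)]] by (simp add: gproj_def gadd_def odp_def)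
  note shapes = sA s1 s2 s3 sx sx1 sx2 sx3
  have Xone: "X one = 0"
    using der[of one one] par_basis(5) by (auto simp: one_mul mul_one)
  have \<alpha>1: "\<alpha> 1 = 0" using Xone by (simp add: \<alpha>_def zs_def one_def)
  have leib': "X (zs h b) = jmul \<delta> (J 0 0 0 (\<alpha> h) 0 0 0 0) b + zs h (X b)" for h b
    using leib sA by simp
  have X0: "X 0 = 0" using add[of 0 0] by simp
  have P1: "jmul \<delta> xe (zs h x1e) = zs (-h) w1e" for h
    by (simp add: J_eq_iff jmul_sel be_defs dsimps)
  have E1: "X (zs (-h) w1e) = jmul \<delta> (X xe) (zs h x1e) + jmul \<delta> xe (X (zs h x1e))" for h
    using der[of xe "zs h x1e"] par_basis(6) P1 by simp
  have "- (h * \<mu>) = - \<alpha> h - h * \<kappa>" for h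
    using E1[of h] unfolding leib' shapes by (simp add: J_eq_iff jmul_sel be_defs dsimps)
  from this[of 1] this have R1: "\<kappa> = \<mu>" "\<alpha> h = 0" for h by (simp_all add: \<alpha>1)
  have leib0: "X (zs h b) = zs h (X b)" for h b
    using leib' R1 by (simp add: jmul_sel J_eq_iff d0)
  have "X (zs (-1) w2e) = jmul \<delta> (X xe) x2e + jmul \<delta> xe (X x2e)"
    using der[of xe x2e] par_basis bprod by simp
  then have R2: "\<nu> = \<kappa>'"
    unfolding leib0 shapes by (simp add: J_eq_iff jmul_sel be_defs dsimps)
  have "X 0 = jmul \<delta> (X w1e) w2e + jmul \<delta> w1e (X w2e)"
    using der[of w1e w2e] par_basis bprod by simp
  then have R3: "\<nu> = - \<mu>"
    unfolding X0 shapes by (simp add: J_eq_iff jmul_sel be_defs dsimps eq_neg_iff_add_eq_0 add.commute)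
  have "X 0 = jmul \<delta> (X w1e) w3e + jmul \<delta> w1e (X w3e)"
    using der[of w1e w3e] par_basis bprod by simp
  then have R4: "\<gamma> = 0"
    unfolding X0 shapes by (simp add: J_eq_iff jmul_sel be_defs dsimps)
  have "X 0 = jmul \<delta> (X w1e) xe + jmul \<delta> w1e (X xe)"
    using der[of w1e xe] par_basis bprod by simp
  then have R5: "la = \<delta> \<mu>"
    unfolding X0 shapes by (simp add: J_eq_iff jmul_sel be_defs dsimps)
  have "X (zs (-1) x3e) = jmul \<delta> (X w1e) x2e + jmul \<delta> w1e (X x2e)"
    using der[of w1e x2e] par_basis bprod by simp
  then have R6: "\<epsilon> = 0"
    unfolding leib0 shapes by (simp add: J_eq_iff jmul_sel be_defs dsimps)
  have R23: "\<kappa>' = - \<mu>" using R2 R3 by simp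
  have \<mu>: "c2 (X w1e) = \<mu>" using s1 by simp
  show ?thesis
  proof
    fix c
    have "X c = X (zs (c0 c) one + zs (c1 c) w1e + zs (c2 c) w2e + zs (c3 c) w3e
      + zs (d0 c) xe + zs (d1 c) x1e + zs (d2 c) x2e + zs (d3 c) x3e)"
      using decomp[of c] by simp
    also have "\<dots> = PhiE \<mu> c"
      by (simp only: add leib0 shapes Xone) (simp add: R1 R23 R3 R4 R5 R6 PhiE_def J_eq_iff jmul_sel dsimps be_defs)
    finally show "X c = PhiE (c2 (X w1e)) c" using \<mu> by simp
  qed
qed


lemma class_od:
  assumes sd: "sder \<iota> \<delta> True X" and grd: "\<forall>\<beta>. X ` Jg \<beta> \<subseteq> Jg (gadd (True,True) \<beta>)"
  shows "X = PhiO (c0 (X x3e))"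
proof -
  have add: "X (a + b) = X a + X b" for a b using sd by (simp add: sder_def Flin_def)
  have dere: "a \<in> Jev \<Longrightarrow> X (jmul \<delta> a b) = jmul \<delta> (X a) b + jmul \<delta> a (X b)" for a b
    using sd unfolding sder_def par_def by auto
  have dero: "a \<in> Jod \<Longrightarrow> par a \<Longrightarrow> X (jmul \<delta> a b) = jmul \<delta> (X a) b - jmul \<delta> a (X b)" for a b
    using sd unfolding sder_def by auto
  have ev: "a \<in> Jev \<Longrightarrow> X a \<in> Jod" for a using sd by (auto simp: sder_def)
  have od: "a \<in> Jod \<Longrightarrow> X a \<in> Jev" for a using sd by (auto simp: sder_def)
  have gr: "a \<in> Jg \<beta> \<Longrightarrow> X a \<in> Jg (gadd (True,True) \<beta>)" for a \<beta> using grd by blast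
  have leib: "X (zs h b) = jmul \<delta> (X (zs h one)) b + zs h (X b)" for h b
    using dere[of "zs h one" b] par_basis(1)[of h] by (simp add: zs_one_mul)
  define \<beta> where "\<beta> h = d3 (X (zs h one))" for h
  have sA: "X (zs h one) = J 0 0 0 0 0 0 0 (\<beta> h)" for h
    using shape_od[OF gr[OF Jg_basis(1)] ev[OF par_basis(1)]] by (simp add: gproj_def gadd_def odp_def \<beta>_def)
  obtain \<pi> where s1: "X w1e = J 0 0 0 0 0 0 \<pi> 0"
    using shape_od[OF gr[OF Jg_basis(2)] ev[OF par_basis(2)]] by (simp add: gproj_def gadd_def odp_def)
  obtain \<pi>' where s2: "X w2e = J 0 0 0 0 0 \<pi>' 0 0"
    using shape_od[OF gr[OF Jg_basis(3)] ev[OF par_basis(3)]] by (simp add: gproj_def gadd_def odp_def)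
  obtain \<zeta> where s3: "X w3e = J 0 0 0 0 \<zeta> 0 0 0"
    using shape_od[OF gr[OF Jg_basis(4)] ev[OF par_basis(4)]] by (simp add: gproj_def gadd_def odp_def)
  obtain \<sigma> where sx: "X xe = J 0 0 0 \<sigma> 0 0 0 0"
    using shape_ev[OF gr[OF Jg_basis(5)] od[OF par_basis(6)]] by (simp add: gproj_def gadd_def evp_def)
  obtain \<theta> where sx1: "X x1e = J 0 0 \<theta> 0 0 0 0 0"
    using shape_ev[OF gr[OF Jg_basis(6)] od[OF par_basis(7)]] by (simp add: gproj_def gadd_def evp_def)
  obtain \<theta>' where sx2: "X x2e = J 0 \<theta>' 0 0 0 0 0 0"
    using shape_ev[OF gr[OF Jg_basis(7)] od[OF par_basis(8)]] by (simp add: gproj_def gadd_def evp_def)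
  obtain \<eta> where sx3: "X x3e = J \<eta> 0 0 0 0 0 0 0"
    using shape_ev[OF gr[OF Jg_basis(8)] od[OF par_basis(9)]] by (simp add: gproj_def gadd_def evp_def)
  note shapes = sA s1 s2 s3 sx sx1 sx2 sx3
  have Xone: "X one = 0"
    using dere[of one one] par_basis(5) by (auto simp: one_mul mul_one)
  have \<beta>1: "\<beta> 1 = 0" using Xone by (simp add: \<beta>_def zs_def one_def)
  have leib': "X (zs h b) = jmul \<delta> (J 0 0 0 0 0 0 0 (\<beta> h)) b + zs h (X b)" for h b
    using leib sA by simp
  have "X one = jmul \<delta> (X w1e) w1e + jmul \<delta> w1e (X w1e)"
    using dere[of w1e w1e] par_basis bprod by simp
  then have "\<pi> + \<pi> = 0"
    unfolding Xone shapes by (simp add: J_eq_iff jmul_sel be_defs dsimps)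
  then have Q1: "\<pi> = 0" by (rule two_zero)
  have "X one = jmul \<delta> (X w2e) w2e + jmul \<delta> w2e (X w2e)"
    using dere[of w2e w2e] par_basis bprod by simp
  then have "\<pi>' + \<pi>' = 0"
    unfolding Xone shapes by (simp add: J_eq_iff jmul_sel be_defs dsimps)
  then have Q2: "\<pi>' = 0" by (rule two_zero)
  have "X w1e = jmul \<delta> (X x1e) xe - jmul \<delta> x1e (X xe)"
    using dero[of x1e xe] par_basis bprod by simp
  then have Q3: "\<sigma> = \<delta> \<theta>"
    unfolding shapes Q1 by (simp add: J_eq_iff jmul_sel be_defs dsimps)
  have "X w3e = jmul \<delta> (X x3e) xe - jmul \<delta> x3e (X xe)"
    using dero[of x3e xe] par_basis bprod by simp
  then have Q4: "\<zeta> = \<eta>"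
    unfolding shapes by (simp add: J_eq_iff jmul_sel be_defs dsimps)
  have "X x2e = jmul \<delta> (X w3e) x1e + jmul \<delta> w3e (X x1e)"
    using dere[of w3e x1e] par_basis bprod by simp
  then have Q5: "\<theta>' = - \<zeta>"
    unfolding shapes by (simp add: J_eq_iff jmul_sel be_defs dsimps)
  have "X x1e = jmul \<delta> (X w2e) x3e + jmul \<delta> w2e (X x3e)"
    using dere[of w2e x3e] par_basis bprod by simp
  then have Q6: "\<theta> = \<eta>"
    unfolding shapes by (simp add: J_eq_iff jmul_sel be_defs dsimps)
  have "X (zs (\<delta> h) x1e) = jmul \<delta> (X (zs h w1e)) xe + jmul \<delta> (zs h w1e) (X xe)" for h
    using dere[of "zs h w1e" xe] par_basis bprod by simp
  then have Q7': "\<delta> h * \<eta> = - \<beta> h" for h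
    unfolding leib' shapes Q1 Q6 by (simp add: J_eq_iff jmul_sel be_defs dsimps)
  have Q7: "\<beta> h = - (\<eta> * \<delta> h)" for h
    using Q7'[of h] by (metis minus_minus mult.commute)
  have \<eta>: "c0 (X x3e) = \<eta>" using sx3 by simp
  show ?thesis
  proof
    fix c
    have "X c = X (zs (c0 c) one + zs (c1 c) w1e + zs (c2 c) w2e + zs (c3 c) w3e
      + zs (d0 c) xe + zs (d1 c) x1e + zs (d2 c) x2e + zs (d3 c) x3e)"
      using decomp[of c] by simp
    also have "\<dots> = PhiO \<eta> c"
      by (simp only: add leib' shapes Xone) (simp add: Q1 Q2 Q3 Q4 Q5 Q6 Q7 PhiO_def J_eq_iff jmul_sel dsimps be_defs algebra_simps)
    finally show "X c = PhiO (c0 (X x3e)) c" using \<eta> by simp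
  qed
qed


lemma Jg_iff: "a \<in> Jg \<gamma> \<longleftrightarrow> (\<gamma> \<noteq> (False,False) \<longrightarrow> c0 a = 0 \<and> d0 a = 0) \<and> (\<gamma> \<noteq> (True,False) \<longrightarrow> c1 a = 0 \<and> d1 a = 0)
   \<and> (\<gamma> \<noteq> (False,True) \<longrightarrow> c2 a = 0 \<and> d2 a = 0) \<and> (\<gamma> \<noteq> (True,True) \<longrightarrow> c3 a = 0 \<and> d3 a = 0)"
  by (cases a) (cases \<gamma>, auto simp: Jg_def gproj_def)

lemma PhiEO_grade: "a \<in> Jg \<beta> \<Longrightarrow> PhiE m a + PhiO s a \<in> Jg (gadd (True,True) \<beta>)"
  unfolding Jg_iff gadd_def by (cases \<beta>) (auto simp: PhiE_def PhiO_def dsimps)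

lemma grade_split:
  assumes s0: "sder \<iota> \<delta> False X0" and s1: "sder \<iota> \<delta> True X1"
    and gr: "\<forall>\<beta>. (\<lambda>a. X0 a + X1 a) ` Jg \<beta> \<subseteq> Jg (gadd \<gamma> \<beta>)"
  shows "\<forall>\<beta>. X0 ` Jg \<beta> \<subseteq> Jg (gadd \<gamma> \<beta>)" "\<forall>\<beta>. X1 ` Jg \<beta> \<subseteq> Jg (gadd \<gamma> \<beta>)"
proof -
  have sep: "u \<in> Jev \<Longrightarrow> v \<in> Jod \<Longrightarrow> u + v \<in> Jg g \<Longrightarrow> u \<in> Jg g \<and> v \<in> Jg g" for u v :: "'z J" and g
    by (auto simp: Jg_iff Jev_iff Jod_iff)
  have Jgadd: "u \<in> Jg g \<Longrightarrow> v \<in> Jg g \<Longrightarrow> u + v \<in> Jg g" for u v :: "'z J" and g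
    by (simp add: Jg_iff)
  have add0: "X0 (a + b) = X0 a + X0 b" for a b using s0 by (simp add: sder_def Flin_def)
  have add1: "X1 (a + b) = X1 a + X1 b" for a b using s1 by (simp add: sder_def Flin_def)
  have e0: "a \<in> Jev \<Longrightarrow> X0 a \<in> Jev" "a \<in> Jod \<Longrightarrow> X0 a \<in> Jod" for a using s0 by (auto simp: sder_def)
  have e1: "a \<in> Jev \<Longrightarrow> X1 a \<in> Jod" "a \<in> Jod \<Longrightarrow> X1 a \<in> Jev" for a using s1 by (auto simp: sder_def)
  have both: "X0 a \<in> Jg (gadd \<gamma> \<beta>) \<and> X1 a \<in> Jg (gadd \<gamma> \<beta>)" if a: "a \<in> Jg \<beta>" for a \<beta>
  proof -
    have dec: "a = evp a + odp a" by (simp add: J_eq_iff evp_def odp_def)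
    have ea: "evp a \<in> Jg \<beta>" "evp a \<in> Jev" "odp a \<in> Jg \<beta>" "odp a \<in> Jod"
      using a by (simp_all add: Jg_iff Jev_iff Jod_iff evp_def odp_def)
    have g1: "X0 (evp a) + X1 (evp a) \<in> Jg (gadd \<gamma> \<beta>)" using gr ea by blast
    have g2': "X0 (odp a) + X1 (odp a) \<in> Jg (gadd \<gamma> \<beta>)" using gr ea by blast
    have g2: "X1 (odp a) + X0 (odp a) \<in> Jg (gadd \<gamma> \<beta>)" using g2' by (simp add: add.commute)
    from sep[OF e0(1)[OF ea(2)] e1(1)[OF ea(2)] g1] sep[OF e1(2)[OF ea(4)] e0(2)[OF ea(4)] g2]
    have "X0 (evp a) \<in> Jg (gadd \<gamma> \<beta>)" "X1 (evp a) \<in> Jg (gadd \<gamma> \<beta>)"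
         "X0 (odp a) \<in> Jg (gadd \<gamma> \<beta>)" "X1 (odp a) \<in> Jg (gadd \<gamma> \<beta>)" by auto
    then show ?thesis by (subst (1 2) dec) (simp add: add0 add1 Jgadd)
  qed
  then show "\<forall>\<beta>. X0 ` Jg \<beta> \<subseteq> Jg (gadd \<gamma> \<beta>)" "\<forall>\<beta>. X1 ` Jg \<beta> \<subseteq> Jg (gadd \<gamma> \<beta>)" by auto
qed

lemma Aset_char: "X \<in> Aset \<iota> \<delta> \<longleftrightarrow> (\<exists>m s. X = (\<lambda>c. PhiE m c + PhiO s c))"
proof
  assume "X \<in> Aset \<iota> \<delta>"
  then obtain X0 X1 where s0: "sder \<iota> \<delta> False X0" and s1: "sder \<iota> \<delta> True X1"
    and X: "X = (\<lambda>a. X0 a + X1 a)" and gr: "\<forall>\<beta>. X ` Jg \<beta> \<subseteq> Jg (gadd (True,True) \<beta>)"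
    unfolding Aset_def DerG_def Der_def by blast
  from grade_split[OF s0 s1] gr X
  have "\<forall>\<beta>. X0 ` Jg \<beta> \<subseteq> Jg (gadd (True,True) \<beta>)" "\<forall>\<beta>. X1 ` Jg \<beta> \<subseteq> Jg (gadd (True,True) \<beta>)" by auto
  from class_ev[OF s0 this(1)] class_od[OF s1 this(2)] X
  show "\<exists>m s. X = (\<lambda>c. PhiE m c + PhiO s c)" by metis
next
  assume "\<exists>m s. X = (\<lambda>c. PhiE m c + PhiO s c)"
  then obtain m s where X: "X = (\<lambda>c. PhiE m c + PhiO s c)" by blast
  have "X \<in> Der \<iota> \<delta>" unfolding Der_def using sder_PhiE sder_PhiO X by blast
  moreover have "\<forall>\<beta>. X ` Jg \<beta> \<subseteq> Jg (gadd (True,True) \<beta>)" using PhiEO_grade X by blast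
  ultimately show "X \<in> Aset \<iota> \<delta>" by (simp add: Aset_def DerG_def)
qed


lemma tau_tau: "tau \<iota> i (tau \<iota> i a) = a"
  by (simp add: tau_closed J_eq_iff)
lemma phi3: "phi \<iota> i (phi \<iota> i (phi \<iota> i a)) = a"
  by (simp add: phi_closed J_eq_iff II2)
lemma inv_tau: "inv (tau \<iota> i) = tau \<iota> i"
  by (rule inv_unique_comp) (auto simp: tau_tau)
lemma inv_phi: "inv (phi \<iota> i) = phi \<iota> i \<circ> phi \<iota> i"
  by (rule inv_unique_comp) (auto simp: phi3)
lemma inv_phi2: "inv (phi \<iota> i \<circ> phi \<iota> i) = phi \<iota> i"
  by (rule inv_unique_comp) (auto simp: phi3)

lemma Abar_PhiEO: "Abar \<iota> i (\<lambda>c. PhiE m c + PhiO s c) = (\<lambda>c. PhiE m c + PhiO s c)"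
  by (rule ext) (simp add: Abar_def conj_def inv_tau tau_closed PhiE_def PhiO_def J_eq_iff dsimps)

lemma Amul_PhiEO: "Amul \<iota> i (\<lambda>c. PhiE m1 c + PhiO s1 c) (\<lambda>c. PhiE m2 c + PhiO s2 c)
   = (\<lambda>c. PhiE (m1 * m2 - \<delta> s1 * s2 + s1 * \<delta> s2) c + PhiO (m1 * s2 + m2 * s1) c)"
  by (rule ext) (simp add: Amul_def conj_def inv_tau inv_phi inv_phi2 scom_def evm_def odm_def evp_def odp_def
      phi_closed tau_closed PhiE_def PhiO_def J_eq_iff dsimps algebra_simps II II2)


lemma Kset_iff: "k \<in> Kset \<longleftrightarrow> c1 k = 0 \<and> c2 k = 0 \<and> c3 k = 0 \<and> d1 k = 0 \<and> d2 k = 0 \<and> d3 k = 0"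
  for k :: "'z J"
proof
  assume "k \<in> Kset" then show "c1 k = 0 \<and> c2 k = 0 \<and> c3 k = 0 \<and> d1 k = 0 \<and> d2 k = 0 \<and> d3 k = 0"
    by (auto simp: Kset_def)
next
  assume "c1 k = 0 \<and> c2 k = 0 \<and> c3 k = 0 \<and> d1 k = 0 \<and> d2 k = 0 \<and> d3 k = 0"
  then have "k = zs (c0 k) one + zs (d0 k) yy" by (simp add: J_eq_iff)
  then show "k \<in> Kset" unfolding Kset_def by blast
qed

lemma Phi_fun: "Phi \<iota> \<delta> i k = (\<lambda>c. PhiE (c0 k) c + PhiO (I * d0 k) c)"
  by (rule ext) (rule Phi_closed)

lemma Kmk: "zs m one + zs (- (I * s)) yy \<in> Kset" "c0 (zs m one + zs (- (I * s)) yy) = m"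
   "I * d0 (zs m one + zs (- (I * s)) yy) = s"
  by (simp_all add: Kset_iff II2)

lemma PhiO0: "PhiO 0 c = 0" by (simp add: PhiO_def J_eq_iff dsimps)
lemma PhiE0: "PhiE 0 c = 0" by (simp add: PhiE_def J_eq_iff dsimps)

lemma main:
  shows "(\<forall>X \<in> Aset \<iota> \<delta>. Abar \<iota> i X = X)
    \<and> bij_betw (Phi \<iota> \<delta> i) Kset (Aset \<iota> \<delta>)
    \<and> (\<forall>a \<in> Kset. \<forall>b \<in> Kset. Phi \<iota> \<delta> i (a + b) = (\<lambda>c. Phi \<iota> \<delta> i a c + Phi \<iota> \<delta> i b c))
    \<and> (\<forall>r. \<forall>a \<in> Kset. Phi \<iota> \<delta> i (zs (\<iota> r) a) = (\<lambda>c. zs (\<iota> r) (Phi \<iota> \<delta> i a c)))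
    \<and> (\<forall>a \<in> Kset. \<forall>b \<in> Kset. Phi \<iota> \<delta> i (jmul \<delta> a b) = Amul \<iota> i (Phi \<iota> \<delta> i a) (Phi \<iota> \<delta> i b))
    \<and> Phi \<iota> \<delta> i ` (Kset \<inter> Jev) = {X \<in> Aset \<iota> \<delta>. sder \<iota> \<delta> False X}
    \<and> Phi \<iota> \<delta> i ` (Kset \<inter> Jod) = {X \<in> Aset \<iota> \<delta>. sder \<iota> \<delta> True X}"
proof (intro conjI)
  show "\<forall>X \<in> Aset \<iota> \<delta>. Abar \<iota> i X = X"
  proof
    fix X assume "X \<in> Aset \<iota> \<delta>"
    then obtain m s where X: "X = (\<lambda>c. PhiE m c + PhiO s c)" using Aset_char by blast
    show "Abar \<iota> i X = X" unfolding X by (rule Abar_PhiEO)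
  qed
  have PhiA: "Phi \<iota> \<delta> i k \<in> Aset \<iota> \<delta>" for k
    unfolding Aset_char Phi_fun by blast
  have surj: "\<exists>k \<in> Kset. X = Phi \<iota> \<delta> i k" if XA: "X \<in> Aset \<iota> \<delta>" for X
  proof -
    obtain m s where X: "X = (\<lambda>c. PhiE m c + PhiO s c)" using XA Aset_char by blast
    show ?thesis using Kmk[of m s] X unfolding Phi_fun by metis
  qed
  show "bij_betw (Phi \<iota> \<delta> i) Kset (Aset \<iota> \<delta>)"
    unfolding bij_betw_def
  proof (intro conjI)
    show "inj_on (Phi \<iota> \<delta> i) Kset"
    proof (rule inj_onI)
      fix a b assume a: "a \<in> Kset" and b: "b \<in> Kset" and e: "Phi \<iota> \<delta> i a = Phi \<iota> \<delta> i b"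
      have "Phi \<iota> \<delta> i a w1e = Phi \<iota> \<delta> i b w1e" "Phi \<iota> \<delta> i a x3e = Phi \<iota> \<delta> i b x3e" using e by simp_all
      then have "c0 a = c0 b" "I * d0 a = I * d0 b"
        by (simp_all add: Phi_closed PhiE_def PhiO_def J_eq_iff be_defs dsimps)
      then have "c0 a = c0 b" "d0 a = d0 b" by (simp, metis II2 neg_equal_iff_equal)
      then show "a = b" using a b by (simp add: Kset_iff J_eq_iff)
    qed
    show "Phi \<iota> \<delta> i ` Kset = Aset \<iota> \<delta>" using PhiA surj by auto
  qed
  show "\<forall>a \<in> Kset. \<forall>b \<in> Kset. Phi \<iota> \<delta> i (a + b) = (\<lambda>c. Phi \<iota> \<delta> i a c + Phi \<iota> \<delta> i b c)"
    by (intro ballI ext) (simp add: Phi_closed PhiE_def PhiO_def J_eq_iff dsimps algebra_simps)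
  show "\<forall>r. \<forall>a \<in> Kset. Phi \<iota> \<delta> i (zs (\<iota> r) a) = (\<lambda>c. zs (\<iota> r) (Phi \<iota> \<delta> i a c))"
    by (intro allI ballI ext) (simp add: Phi_closed PhiE_def PhiO_def J_eq_iff dsimps der_smul algebra_simps)
  show "\<forall>a \<in> Kset. \<forall>b \<in> Kset. Phi \<iota> \<delta> i (jmul \<delta> a b) = Amul \<iota> i (Phi \<iota> \<delta> i a) (Phi \<iota> \<delta> i b)"
  proof (intro ballI)
    fix a b :: "'z J" assume a: "a \<in> Kset" and b: "b \<in> Kset"
    have 1: "c0 (jmul \<delta> a b) = c0 a * c0 b - \<delta> (I * d0 a) * (I * d0 b) + (I * d0 a) * \<delta> (I * d0 b)"
      using a b by (simp add: Kset_iff jmul_sel dsimps algebra_simps II II2)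
    have 2: "I * d0 (jmul \<delta> a b) = c0 a * (I * d0 b) + c0 b * (I * d0 a)"
      using a b by (simp add: Kset_iff jmul_sel algebra_simps)
    show "Phi \<iota> \<delta> i (jmul \<delta> a b) = Amul \<iota> i (Phi \<iota> \<delta> i a) (Phi \<iota> \<delta> i b)"
      unfolding Phi_fun Amul_PhiEO 1 2 ..
  qed
  show "Phi \<iota> \<delta> i ` (Kset \<inter> Jev) = {X \<in> Aset \<iota> \<delta>. sder \<iota> \<delta> False X}"
  proof (intro equalityI subsetI)
    fix X assume "X \<in> Phi \<iota> \<delta> i ` (Kset \<inter> Jev)"
    then obtain k where k: "k \<in> Kset" "k \<in> Jev" and X: "X = Phi \<iota> \<delta> i k" by blast
    have "X = PhiE (c0 k)" using k X by (auto simp: Phi_fun Jev_iff PhiO0)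
    then show "X \<in> {X \<in> Aset \<iota> \<delta>. sder \<iota> \<delta> False X}" using PhiA[of k] X sder_PhiE by simp
  next
    fix X assume X: "X \<in> {X \<in> Aset \<iota> \<delta>. sder \<iota> \<delta> False X}"
    then obtain k where k: "k \<in> Kset" and Xk: "X = Phi \<iota> \<delta> i k" using surj by blast
    have "X x3e \<in> Jod" using X par_basis(9) by (auto simp: sder_def)
    then have "I * d0 k = 0" unfolding Xk by (simp add: Phi_closed PhiE_def PhiO_def Jod_iff be_defs dsimps)
    then have "d0 k = 0" by (metis II2 minus_equation_iff mult_zero_right)
    then have "k \<in> Jev" using k by (simp add: Kset_iff Jev_iff)
    then show "X \<in> Phi \<iota> \<delta> i ` (Kset \<inter> Jev)" using k Xk by blast
  qed
  show "Phi \<iota> \<delta> i ` (Kset \<inter> Jod) = {X \<in> Aset \<iota> \<delta>. sder \<iota> \<delta> True X}"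
  proof (intro equalityI subsetI)
    fix X assume "X \<in> Phi \<iota> \<delta> i ` (Kset \<inter> Jod)"
    then obtain k where k: "k \<in> Kset" "k \<in> Jod" and X: "X = Phi \<iota> \<delta> i k" by blast
    have "X = PhiO (I * d0 k)" using k X by (auto simp: Phi_fun Jod_iff PhiE0)
    then show "X \<in> {X \<in> Aset \<iota> \<delta>. sder \<iota> \<delta> True X}" using PhiA[of k] X sder_PhiO by simp
  next
    fix X assume X: "X \<in> {X \<in> Aset \<iota> \<delta>. sder \<iota> \<delta> True X}"
    then obtain k where k: "k \<in> Kset" and Xk: "X = Phi \<iota> \<delta> i k" using surj by blast
    have "X w1e \<in> Jod" using X par_basis(2) by (auto simp: sder_def)
    then have "c0 k = 0" unfolding Xk by (simp add: Phi_closed PhiE_def PhiO_def Jod_iff be_defs dsimps)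
    then have "k \<in> Jod" using k by (simp add: Kset_iff Jod_iff)
    then show "X \<in> Phi \<iota> \<delta> i ` (Kset \<inter> Jod)" using k Xk by blast
  qed
qed

end
theorem theorem6p1:
  fixes \<iota> :: "'f::field \<Rightarrow> 'z::comm_ring_1" and \<delta> :: "'z \<Rightarrow> 'z" and i :: 'f
  assumes iota_add: "\<And>a b. \<iota> (a + b) = \<iota> a + \<iota> b"
    and iota_mult: "\<And>a b. \<iota> (a * b) = \<iota> a * \<iota> b"
    and iota_one: "\<iota> 1 = 1"
    and char: "(2::'f) \<noteq> 0"
    and sqrt_m1: "i * i = -1"
    and der_add: "\<And>f g. \<delta> (f + g) = \<delta> f + \<delta> g"
    and der_smul: "\<And>c f. \<delta> (\<iota> c * f) = \<iota> c * \<delta> f"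
    and der_leibniz: "\<And>f g. \<delta> (f * g) = \<delta> f * g + f * \<delta> g"
    and span: "\<And>z. \<exists>n (c :: nat \<Rightarrow> 'f) f g. z = (\<Sum>k<n. \<iota> (c k) * f k * \<delta> (g k))"
  shows "(\<forall>X \<in> Aset \<iota> \<delta>. Abar \<iota> i X = X)
    \<and> bij_betw (Phi \<iota> \<delta> i) Kset (Aset \<iota> \<delta>)
    \<and> (\<forall>a \<in> Kset. \<forall>b \<in> Kset. Phi \<iota> \<delta> i (a + b) = (\<lambda>c. Phi \<iota> \<delta> i a c + Phi \<iota> \<delta> i b c))
    \<and> (\<forall>r. \<forall>a \<in> Kset. Phi \<iota> \<delta> i (zs (\<iota> r) a) = (\<lambda>c. zs (\<iota> r) (Phi \<iota> \<delta> i a c)))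
    \<and> (\<forall>a \<in> Kset. \<forall>b \<in> Kset. Phi \<iota> \<delta> i (jmul \<delta> a b) = Amul \<iota> i (Phi \<iota> \<delta> i a) (Phi \<iota> \<delta> i b))
    \<and> Phi \<iota> \<delta> i ` (Kset \<inter> Jev) = {X \<in> Aset \<iota> \<delta>. sder \<iota> \<delta> False X}
    \<and> Phi \<iota> \<delta> i ` (Kset \<inter> Jod) = {X \<in> Aset \<iota> \<delta>. sder \<iota> \<delta> True X}"
proof -
  interpret ck \<iota> \<delta> i
    using iota_add iota_mult iota_one char sqrt_m1 der_add der_smul der_leibniz
    by unfold_locales auto
  show ?thesis by (rule main)
qed

end
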